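(* Let $\alpha>1$ and let $d>1$ be an integer. Let $L_d(\alpha)=\{\alpha^n : n\in\mathbb{N}_0\}^d\subseteq\mathbb{R}^d$ and $k=\left\lfloor\sqrt{\tfrac{1}{\alpha-1}}\,\right\rfloor$. Then \[h(L_d(\alpha))\ge\binom{k+d-1}{d-1}.\]
   Context: For a set $S\subseteq\mathbb{R}^d$, the Helly number $h(S)$ is the smallest $h$ such that the following holds: for every finite family $\mathcal{F}$ of convex sets in $\mathbb{R}^d$, if every $h$ or fewer sets of $\mathcal{F}$ have a point of $S$ in their intersection, then the intersection of all sets of $\mathcal{F}$ contains a point of $S$. If no such $h$ exists, $h(S)=\infty$. Here $\mathbb{N}_0=\{0,1,2,\dots\}$. *)

theory Defs
  imports "HOL-Analysis.Analysis" "HOL-Library.Extended_Nat"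
begin

definition helly_prop :: "('a::real_vector) set \<Rightarrow> nat \<Rightarrow> bool" where
  "helly_prop S h \<longleftrightarrow>
     (\<forall>F. finite F \<and> (\<forall>C\<in>F. convex C) \<and>
          (\<forall>G. G \<subseteq> F \<and> card G \<le> h \<longrightarrow> \<Inter>G \<inter> S \<noteq> {})
        \<longrightarrow> \<Inter>F \<inter> S \<noteq> {})"

definition helly_number :: "('a::real_vector) set \<Rightarrow> enat" where
  "helly_number S = (if \<exists>h. helly_prop S h then enat (LEAST h. helly_prop S h) else \<infinity>)"

definition lattice_L :: "real \<Rightarrow> (real ^ 'n) set" where
  "lattice_L \<alpha> = {x. \<forall>i. \<exists>n::nat. x $ i = \<alpha> ^ n}"

end

theory Submission
  imports Defs "HOL-Library.Multiset"
begin

lemma count_sum_univ: "sum (count M) (UNIV::'a::finite set) = size M"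
proof -
  have "size M = sum (count M) (set_mset M)" by (simp add: size_multiset_overloaded_eq)
  also have "\<dots> = sum (count M) UNIV"
    by (rule sum.mono_neutral_left) (auto simp: not_in_iff)
  finally show ?thesis by simp
qed

lemma card_A:
  "card {a::'a::finite \<Rightarrow> nat. sum a UNIV = k} = (CARD('a) + k - 1) choose k"
proof -
  have "bij_betw count (multisets_of_size UNIV k) {a::'a \<Rightarrow> nat. sum a UNIV = k}"
  proof (rule bij_betwI[where g = Abs_multiset])
    show "count \<in> multisets_of_size UNIV k \<rightarrow> {a::'a \<Rightarrow> nat. sum a UNIV = k}"
      by (auto simp: multisets_of_size_def count_sum_univ)
    show "Abs_multiset \<in> {a::'a \<Rightarrow> nat. sum a UNIV = k} \<rightarrow> multisets_of_size UNIV k"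
      by (auto simp: multisets_of_size_def count_sum_univ[symmetric] count_Abs_multiset)
  qed (auto simp: count_Abs_multiset count_inverse)
  then have "card {a::'a \<Rightarrow> nat. sum a UNIV = k} = card (multisets_of_size (UNIV::'a set) k)"
    by (simp add: bij_betw_same_card)
  then show ?thesis by (simp add: card_multisets_of_size)
qed

lemma fact_double: "2 ^ m * fact m \<le> (fact (2*m) :: real)"
proof (induction m)
  case 0 then show ?case by simp
next
  case (Suc m)
  have "(2::real) ^ Suc m * fact (Suc m) = (2 * (real m + 1)) * (2^m * fact m)"
    by (simp add: algebra_simps)
  also have "\<dots> \<le> ((2*real m + 2) * (2 * real m + 1)) * fact (2*m)"
    by (rule mult_mono) (use Suc in \<open>auto simp: algebra_simps\<close>)
  also have "\<dots> = fact (2 * Suc m)"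
    by (simp add: algebra_simps)
  finally show ?case .
qed

lemma cosh_le: "cosh (s::real) \<le> exp (s^2/2)"
proof -
  have e: "(\<lambda>n. (s^2/2) ^ n /\<^sub>R fact n) sums exp (s^2/2)" by (rule exp_converges)
  have "(\<lambda>n. if even n then (\<lambda>m. (s^2/2) ^ m /\<^sub>R fact m) (n div 2) else (\<lambda>_. 0) ((n - 1) div 2)) sums (0 + exp (s^2/2))"
    by (rule sums_if[OF sums_zero e])
  then have e2: "(\<lambda>n. if even n then (s^2/2) ^ (n div 2) /\<^sub>R fact (n div 2) else 0) sums exp (s^2/2)"
    by simp
  show ?thesis
  proof (rule sums_le[OF _ cosh_converges e2])
    fix n :: nat
    show "(if even n then s ^ n /\<^sub>R fact n else 0) \<le> (if even n then (s^2/2) ^ (n div 2) /\<^sub>R fact (n div 2) else 0)"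
    proof (cases "even n")
      case True
      then obtain m where n: "n = 2*m" by blast
      have e1: "s ^ (2*m) = (s^2)^m" by (simp only: power_mult)
      have p: "0 \<le> (s^2)^m" by simp
      have "(s^2)^m / fact (2*m) \<le> (s^2)^m / (2^m * fact m)"
        by (rule divide_left_mono[OF fact_double p]) auto
      also have "\<dots> = (s^2/2)^m / fact m" by (simp add: power_divide)
      finally have *: "(s^2)^m / fact (2*m) \<le> (s^2/2)^m / fact m" .
      have l: "s ^ (2*m) /\<^sub>R fact (2*m) = (s^2)^m / fact (2*m)"
        unfolding e1 real_scaleR_def divide_inverse by (rule mult.commute)
      have r: "(s^2/2) ^ m /\<^sub>R fact m = (s^2/2)^m / fact m"
        unfolding real_scaleR_def divide_inverse by (rule mult.commute)
      have "(2*m) div 2 = m" by simp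
      then show ?thesis using * l r unfolding n by simp
    qed simp
  qed
qed

lemma exp_strict: "(y::real) \<noteq> 0 \<Longrightarrow> 1 + y < exp y"
proof -
  assume y: "y \<noteq> 0"
  show ?thesis
  proof (cases "1 + y/2 < 0")
    case True then show ?thesis using exp_gt_zero[of y] by linarith
  next
    case False
    have "exp y = exp (y/2) ^ 2" by (simp flip: exp_of_nat_mult)
    moreover have "(1 + y/2)^2 \<le> exp (y/2) ^ 2"
      using False exp_ge_add_one_self[of "y/2"] by (intro power_mono) auto
    moreover have "0 < y^2" using y by simp
    then have "1 + y < (1 + y/2)^2" by (simp add: power2_eq_square algebra_simps)
    ultimately show ?thesis by linarith
  qed
qed

lemma pow_exp: "(\<alpha>::real) > 0 \<Longrightarrow> \<alpha> ^ n = exp (real n * ln \<alpha>)"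
  by (simp add: exp_of_nat_mult)

lemma ratio_exp: "(\<alpha>::real) > 0 \<Longrightarrow> \<alpha> ^ a / \<alpha> ^ b = exp ((real a - real b) * ln \<alpha>)"
  by (simp add: pow_exp left_diff_distrib exp_diff)

lemma L1:
  fixes a b :: "'n::finite \<Rightarrow> nat" and \<alpha> :: real
  assumes "\<alpha> > 1"
  shows "(\<Sum>i\<in>UNIV. \<alpha> ^ a i / \<alpha> ^ b i) \<ge> CARD('n) + ln \<alpha> * (real (sum a UNIV) - real (sum b UNIV))"
    and "a \<noteq> b \<Longrightarrow> (\<Sum>i\<in>UNIV. \<alpha> ^ a i / \<alpha> ^ b i) > CARD('n) + ln \<alpha> * (real (sum a UNIV) - real (sum b UNIV))"
proof -
  have eq: "CARD('n) + ln \<alpha> * (real (sum a UNIV) - real (sum b UNIV)) = (\<Sum>i\<in>UNIV. 1 + (real (a i) - real (b i)) * ln \<alpha>)"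
    by (simp add: sum.distrib sum_distrib_right sum_distrib_left sum_subtractf algebra_simps)
  have le: "1 + (real (a i) - real (b i)) * ln \<alpha> \<le> \<alpha> ^ a i / \<alpha> ^ b i" for i
    using assms by (simp add: ratio_exp)
  show "(\<Sum>i\<in>UNIV. \<alpha> ^ a i / \<alpha> ^ b i) \<ge> CARD('n) + ln \<alpha> * (real (sum a UNIV) - real (sum b UNIV))"
    unfolding eq by (rule sum_mono) (rule le)
  assume "a \<noteq> b"
  then obtain j where j: "a j \<noteq> b j" by auto
  have lt: "1 + (real (a j) - real (b j)) * ln \<alpha> < \<alpha> ^ a j / \<alpha> ^ b j"
    using assms j by (simp add: ratio_exp exp_strict)
  show "(\<Sum>i\<in>UNIV. \<alpha> ^ a i / \<alpha> ^ b i) > CARD('n) + ln \<alpha> * (real (sum a UNIV) - real (sum b UNIV))"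
    unfolding eq by (rule sum_strict_mono_ex1) (use le lt in auto)
qed

lemma superadd:
  fixes \<beta> :: real
  assumes "\<beta> \<ge> 0" "finite I"
  shows "(\<Sum>i\<in>I. \<beta> ^ n i - 1) \<le> \<beta> ^ (\<Sum>i\<in>I. n i) - 1"
  using assms(2)
proof (induction I rule: finite_induct)
  case empty then show ?case by simp
next
  case (insert x F)
  have prod: "0 \<le> (\<beta> ^ n x - 1) * (\<beta> ^ (\<Sum>i\<in>F. n i) - 1)"
  proof (cases "\<beta> \<ge> 1")
    case True then show ?thesis by (simp add: one_le_power)
  next
    case False
    then have "\<beta> ^ n x \<le> 1" "\<beta> ^ (\<Sum>i\<in>F. n i) \<le> 1" using assms(1) by (auto intro: power_le_one)
    then show ?thesis by (simp add: mult_nonpos_nonpos)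
  qed
  have "(\<Sum>i\<in>insert x F. \<beta> ^ n i - 1) = (\<beta> ^ n x - 1) + (\<Sum>i\<in>F. \<beta> ^ n i - 1)"
    using insert by simp
  also have "\<dots> \<le> (\<beta> ^ n x - 1) + (\<beta> ^ (\<Sum>i\<in>F. n i) - 1)" using insert.IH by simp
  also have "\<dots> \<le> \<beta> ^ (n x + (\<Sum>i\<in>F. n i)) - 1"
    using prod by (simp add: power_add algebra_simps)
  also have "\<dots> = \<beta> ^ (\<Sum>i\<in>insert x F. n i) - 1" using insert by simp
  finally show ?case .
qed

lemma L4:
  fixes \<alpha> :: real and P :: nat
  assumes "\<alpha> > 1" "(real P + 1/2)^2 * ln \<alpha> < 1"
  shows "\<alpha> ^ P + (1/\<alpha>) ^ (P+1) < 2"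
proof -
  define t where "t = ln \<alpha>"
  have t: "t > 0" using assms by (simp add: t_def)
  define s where "s = (real P + 1/2) * t"
  have a1: "\<alpha> ^ P = exp (-t/2) * exp s"
    using assms by (simp add: pow_exp s_def t_def flip: exp_add; simp add: algebra_simps)
  have a2: "(1/\<alpha>) ^ (P+1) = exp (-t/2) * exp (-s)"
  proof -
    have "(1/\<alpha>) ^ (P+1) = exp (real (P+1) * ln (1/\<alpha>))"
      by (rule pow_exp) (use assms in auto)
    also have "\<dots> = exp (-t/2) * exp (-s)"
      using assms by (simp add: s_def t_def ln_div flip: exp_add; simp add: algebra_simps)
    finally show ?thesis .
  qed
  have "exp s + exp (-s) = 2 * cosh s" by (simp add: cosh_field_def)
  also have "\<dots> \<le> 2 * exp (s^2/2)" using cosh_le[of s] by simp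
  finally have c: "exp s + exp (-s) \<le> 2 * exp (s^2/2)" .
  have ss: "s^2 < t"
  proof -
    have "s^2 = ((real P + 1/2)^2 * t) * t" by (simp add: s_def power2_eq_square)
    also have "\<dots> < 1 * t" using assms(2) t by (intro mult_strict_right_mono) (auto simp: t_def)
    finally show ?thesis by simp
  qed
  have "\<alpha> ^ P + (1/\<alpha>) ^ (P+1) = exp (-t/2) * (exp s + exp (-s))"
    unfolding a1 a2 by (simp add: algebra_simps)
  also have "\<dots> \<le> exp (-t/2) * (2 * exp (s^2/2))"
    using c by (intro mult_left_mono) auto
  also have "\<dots> = 2 * exp ((s^2 - t)/2)" by (simp add: diff_divide_distrib flip: exp_add)
  also have "\<dots> < 2 * 1" using ss by simp
  finally show ?thesis by simp
qed

lemma L5: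
  fixes \<alpha> :: real and P k :: nat
  assumes "\<alpha> > 1" "real k ^ 2 * (\<alpha> - 1) \<le> 1" "P + 1 \<le> k"
  shows "(real P + 1/2)^2 * ln \<alpha> < 1"
proof -
  have l0: "0 < ln \<alpha>" using assms by simp
  have l1: "ln \<alpha> \<le> \<alpha> - 1" using assms ln_le_minus_one by simp
  have "(real P + 1/2)^2 < real k ^ 2"
    using assms(3) by (intro power_strict_mono) auto
  then have "(real P + 1/2)^2 * ln \<alpha> < real k ^ 2 * ln \<alpha>" using l0 by simp
  also have "\<dots> \<le> real k ^ 2 * (\<alpha> - 1)" using l1 by (intro mult_left_mono) auto
  finally show ?thesis using assms(2) by linarith
qed

lemma ratio_split:
  fixes \<alpha> :: real assumes "\<alpha> > 0"
  shows "\<alpha> ^ a / \<alpha> ^ b = (\<alpha> ^ (a - b) - 1) + ((1/\<alpha>) ^ (b - a) - 1) + 1"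
proof (cases "b \<le> a")
  case True
  then show ?thesis using assms by (simp add: power_diff)
next
  case False
  then have "a \<le> b" by simp
  then have "\<alpha> ^ b = \<alpha> ^ a * \<alpha> ^ (b - a)" by (simp flip: power_add)
  then show ?thesis using assms False by (simp add: power_one_over)
qed

lemma L3:
  fixes a b :: "'n::finite \<Rightarrow> nat" and \<alpha> :: real and k :: nat
  assumes al: "\<alpha> > 1" and kk: "real k ^ 2 * (\<alpha> - 1) \<le> 1"
    and sa: "sum a UNIV = k" and sb: "sum b UNIV \<ge> k + 1"
  shows "(\<Sum>i\<in>{i. 1 \<le> b i}. \<alpha> ^ a i / \<alpha> ^ b i) < card {i. 1 \<le> b i}"
proof -
  define J where "J = {i. 1 \<le> b i}"
  have fJ: "finite J" by simp
  define P where "P = (\<Sum>i\<in>J. a i - b i)"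
  define N where "N = (\<Sum>i\<in>J. b i - a i)"
  have "(\<Sum>i\<in>J. \<alpha> ^ a i / \<alpha> ^ b i) = (\<Sum>i\<in>J. \<alpha> ^ (a i - b i) - 1) + (\<Sum>i\<in>J. (1/\<alpha>) ^ (b i - a i) - 1) + card J"
  proof -
    have "(\<Sum>i\<in>J. \<alpha> ^ a i / \<alpha> ^ b i) = (\<Sum>i\<in>J. (\<alpha> ^ (a i - b i) - 1) + ((1/\<alpha>) ^ (b i - a i) - 1) + 1)"
      by (intro sum.cong refl ratio_split) (use al in simp)
    also have "\<dots> = (\<Sum>i\<in>J. \<alpha> ^ (a i - b i) - 1) + (\<Sum>i\<in>J. (1/\<alpha>) ^ (b i - a i) - 1) + card J"
      by (simp add: sum.distrib sum_subtractf)
    finally show ?thesis .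
  qed
  also have "\<dots> \<le> (\<alpha> ^ P - 1) + ((1/\<alpha>) ^ N - 1) + card J"
    unfolding P_def N_def using al
    by (intro add_mono superadd) auto
  finally have A: "(\<Sum>i\<in>J. \<alpha> ^ a i / \<alpha> ^ b i) \<le> (\<alpha> ^ P - 1) + ((1/\<alpha>) ^ N - 1) + card J" .
  have PN: "real P - real N = real (sum a J) - real (sum b J)"
  proof -
    have "real P - real N = (\<Sum>i\<in>J. real (a i - b i) - real (b i - a i))"
      by (simp add: P_def N_def sum_subtractf)
    also have "\<dots> = (\<Sum>i\<in>J. real (a i) - real (b i))"
      by (intro sum.cong refl, rename_tac i, case_tac "a i \<le> b i") (auto simp: of_nat_diff)
    also have "\<dots> = real (sum a J) - real (sum b J)" by (simp add: sum_subtractf)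
    finally show ?thesis .
  qed
  have bJ: "sum b J = sum b UNIV"
    unfolding J_def by (rule sum.mono_neutral_left) auto
  have aJ: "sum a J \<le> k" using sa by (metis sum_mono2 finite subset_UNIV zero_le)
  have NP: "P + 1 \<le> N" using PN bJ aJ sb by linarith
  have ia: "0 < 1/\<alpha>" "1/\<alpha> < 1" using al by auto
  have dec: "(1/\<alpha>) ^ N \<le> (1/\<alpha>) ^ (P+1)"
    using ia NP by (intro power_decreasing) auto
  have "(\<alpha> ^ P - 1) + ((1/\<alpha>) ^ N - 1) < 0"
  proof (cases "P = 0")
    case True
    have "(1/\<alpha>) ^ (P+1) < 1" using True ia by simp
    then show ?thesis using True dec by simp
  next
    case False
    have "\<exists>i\<in>J. a i - b i \<noteq> 0"
    proof (rule ccontr)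
      assume "\<not> (\<exists>i\<in>J. a i - b i \<noteq> 0)"
      then have "P = 0" unfolding P_def by simp
      with False show False by simp
    qed
    then obtain i0 where i0: "i0 \<in> J" "a i0 - b i0 > 0" by blast
    have "P = (a i0 - b i0) + (\<Sum>i\<in>J-{i0}. a i - b i)"
      unfolding P_def using i0 fJ by (simp add: sum.remove)
    also have "\<dots> \<le> (a i0 - 1) + (\<Sum>i\<in>J-{i0}. a i)"
      using i0 by (intro add_mono sum_mono) (auto simp: J_def)
    finally have "P + 1 \<le> a i0 + (\<Sum>i\<in>J-{i0}. a i)" using i0 by linarith
    also have "\<dots> = sum a J" using i0 fJ by (simp add: sum.remove)
    finally have "P + 1 \<le> k" using aJ by linarith
    then have "\<alpha> ^ P + (1/\<alpha>) ^ (P+1) < 2"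
      using L4[OF al L5[OF al kk]] by blast
    then show ?thesis using dec by linarith
  qed
  then show ?thesis using A unfolding J_def by linarith
qed

lemma helly_lower:
  fixes S X :: "'a::real_vector set"
  assumes fX: "finite X" and XS: "X \<subseteq> S" and ne: "X \<noteq> {}"
    and cp: "\<And>x. x \<in> X \<Longrightarrow> x \<notin> convex hull (X - {x})"
    and em: "\<And>z. z \<in> S \<Longrightarrow> z \<in> convex hull X \<Longrightarrow> z \<in> X"
  shows "helly_number S \<ge> enat (card X)"
proof -
  define C where "C x = convex hull (X - {x})" for x
  define F where "F = C ` X"
  have inj: "inj_on C X"
  proof (rule inj_onI)
    fix x y assume xy: "x \<in> X" "y \<in> X" "C x = C y"
    show "x = y"
    proof (rule ccontr)
      assume "x \<noteq> y"
      then have "y \<in> C x" using xy unfolding C_def by (auto intro: hull_inc)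
      then show False using cp[OF xy(2)] xy(3) unfolding C_def by simp
    qed
  qed
  have cF: "card F = card X" unfolding F_def using inj by (simp add: card_image)
  have nh: "\<not> helly_prop S h" if h: "h < card X" for h
  proof
    assume hp: "helly_prop S h"
    have fin: "finite F" unfolding F_def using fX by simp
    have cv: "\<forall>D\<in>F. convex D" unfolding F_def C_def by (auto simp: convex_convex_hull)
    have sub: "\<Inter>G \<inter> S \<noteq> {}" if G: "G \<subseteq> F" "card G \<le> h" for G
    proof -
      have "G \<noteq> F" using G h cF by auto
      then obtain x where x: "x \<in> X" "C x \<notin> G" using G unfolding F_def by blast
      have "x \<in> \<Inter>G"
      proof
        fix D assume "D \<in> G"
        then obtain y where y: "y \<in> X" "D = C y" using G unfolding F_def by blast
        then have "y \<noteq> x" using x \<open>D \<in> G\<close> by auto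
        then show "x \<in> D" using x y unfolding C_def by (auto intro: hull_inc)
      qed
      then show ?thesis using x XS by auto
    qed
    have "\<Inter>F \<inter> S \<noteq> {}" using hp fin cv sub unfolding helly_prop_def by blast
    then obtain z where z: "z \<in> \<Inter>F" "z \<in> S" by blast
    obtain x0 where "x0 \<in> X" using ne by blast
    then have "z \<in> C x0" using z unfolding F_def by auto
    also have "C x0 \<subseteq> convex hull X" unfolding C_def by (rule hull_mono) auto
    finally have zX: "z \<in> X" using em z by blast
    then have "z \<in> C z" using z unfolding F_def by auto
    then show False using cp[OF zX] unfolding C_def by simp
  qed
  show ?thesis
  proof (cases "\<exists>h. helly_prop S h")
    case True
    then have "helly_prop S (LEAST h. helly_prop S h)" by (rule LeastI_ex)
    then have le: "card X \<le> (LEAST h. helly_prop S h)" using nh not_le by blast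
    have "helly_number S = enat (LEAST h. helly_prop S h)"
      using True unfolding helly_number_def by (simp only: True if_True)
    then show ?thesis using le by simp
  next
    case False
    then have "helly_number S = \<infinity>" unfolding helly_number_def by (rule if_not_P)
    then show ?thesis by simp
  qed
qed

definition pt :: "real \<Rightarrow> ('n::finite \<Rightarrow> nat) \<Rightarrow> real ^ 'n" where
  "pt \<alpha> a = (\<chi> i. \<alpha> ^ a i)"

lemma inner_pt: "(\<chi> i. w i) \<bullet> pt \<alpha> a = (\<Sum>i\<in>UNIV. w i * \<alpha> ^ a i)"
  by (simp add: inner_vec_def pt_def)

lemma pt_inj: "\<alpha> > 1 \<Longrightarrow> pt \<alpha> a = pt \<alpha> b \<Longrightarrow> a = b"
  by (auto simp: pt_def vec_eq_iff)

lemma inner_if: "(\<chi> i. if 1 \<le> b i then 1 / \<alpha> ^ b i else 0) \<bullet> pt \<alpha> a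
   = (\<Sum>i\<in>{i. 1 \<le> b i}. \<alpha> ^ a i / \<alpha> ^ (b i :: nat))" for \<alpha> :: real and a b :: "'n::finite \<Rightarrow> nat"
proof -
  have "(\<chi> i. if 1 \<le> b i then 1 / \<alpha> ^ b i else 0) \<bullet> pt \<alpha> a
     = (\<Sum>i\<in>UNIV. if 1 \<le> b i then \<alpha> ^ a i / \<alpha> ^ b i else 0)"
  proof -
    have "(\<chi> i. if 1 \<le> b i then 1 / \<alpha> ^ b i else 0) \<bullet> pt \<alpha> a
       = (\<Sum>i\<in>UNIV. (if 1 \<le> b i then 1 / \<alpha> ^ b i else 0) * \<alpha> ^ a i)"
      by (simp add: inner_vec_def pt_def)
    also have "\<dots> = (\<Sum>i\<in>UNIV. if 1 \<le> b i then \<alpha> ^ a i / \<alpha> ^ b i else 0)"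
      by (rule sum.cong) auto
    finally show ?thesis .
  qed
  also have "\<dots> = (\<Sum>i\<in>{i\<in>UNIV. 1 \<le> b i}. \<alpha> ^ a i / \<alpha> ^ (b i))"
    by (rule sum.inter_filter[symmetric]) simp
  finally show ?thesis by simp
qed

lemma inner_div: "(\<chi> i. 1 / \<alpha> ^ b i) \<bullet> pt \<alpha> a
   = (\<Sum>i\<in>UNIV. \<alpha> ^ a i / \<alpha> ^ (b i :: nat))" for \<alpha> :: real and a b :: "'n::finite \<Rightarrow> nat"
  by (simp add: inner_vec_def pt_def)

theorem theorem2:
  fixes \<alpha> :: real and k :: nat
  assumes "\<alpha> > 1"
    and "CARD('n::finite) > 1"
    and "k = nat \<lfloor>sqrt (1 / (\<alpha> - 1))\<rfloor>"
  shows "helly_number (lattice_L \<alpha> :: (real ^ 'n) set)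
           \<ge> enat ((k + CARD('n) - 1) choose (CARD('n) - 1))"
proof -
  note al = assms(1)
  define A where "A = {a::'n \<Rightarrow> nat. sum a UNIV = k}"
  define X where "X = pt \<alpha> ` A"
  have cA: "card A = (CARD('n) + k - 1) choose k" by (simp add: A_def card_A)
  have "0 < card A" unfolding cA using assms(2) by (simp add: zero_less_binomial_iff)
  then have fA: "finite A" and neA: "A \<noteq> {}" by (auto simp: card_gt_0_iff)
  have inj: "inj_on (pt \<alpha>) A" using pt_inj al by (meson inj_onI)
  have cX: "card X = card A" unfolding X_def using inj by (simp add: card_image)
  have kk: "real k ^ 2 * (\<alpha> - 1) \<le> 1"
  proof -
    have sq0: "0 \<le> sqrt (1 / (\<alpha> - 1))" using al by simp
    have "real k = of_int \<lfloor>sqrt (1 / (\<alpha> - 1))\<rfloor>" using assms(3) sq0 by simp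
    also have "\<dots> \<le> sqrt (1 / (\<alpha> - 1))" by simp
    finally have "real k ^ 2 \<le> sqrt (1 / (\<alpha> - 1)) ^ 2" by (intro power_mono) auto
    also have "\<dots> = 1 / (\<alpha> - 1)" using al by simp
    finally show ?thesis using al by (simp add: field_simps)
  qed
  have XS: "X \<subseteq> lattice_L \<alpha>" unfolding X_def lattice_L_def pt_def by auto
  have cp: "x \<notin> convex hull (X - {x})" if x: "x \<in> X" for x
  proof -
    obtain a where a: "a \<in> A" "x = pt \<alpha> a" using x unfolding X_def by blast
    define w :: "real ^ 'n" where "w = (\<chi> i. 1 / \<alpha> ^ a i)"
    have "X - {x} \<subseteq> {y. w \<bullet> y > real CARD('n)}"
    proof
      fix y assume y: "y \<in> X - {x}"
      then obtain a' where a': "a' \<in> A" "y = pt \<alpha> a'" unfolding X_def by blast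
      then have "a' \<noteq> a" using y a by auto
      then have h: "(\<Sum>i\<in>UNIV. \<alpha> ^ a' i / \<alpha> ^ a i) > CARD('n) + ln \<alpha> * (real (sum a' UNIV) - real (sum a UNIV))"
        by (intro L1(2) al)
      have e: "sum a' UNIV = sum a UNIV" using a a' by (simp add: A_def)
      from h have "(\<Sum>i\<in>UNIV. \<alpha> ^ a' i / \<alpha> ^ a i) > CARD('n)" unfolding e by simp
      then show "y \<in> {y. w \<bullet> y > real CARD('n)}"
        using a' by (simp add: w_def inner_div)
    qed
    then have "convex hull (X - {x}) \<subseteq> {y. w \<bullet> y > real CARD('n)}"
      by (intro hull_minimal convex_halfspace_gt)
    moreover have "w \<bullet> x = real CARD('n)" using al by (simp add: a w_def inner_div)
    ultimately show ?thesis by auto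
  qed
  have em: "z \<in> X" if z: "z \<in> lattice_L \<alpha>" "z \<in> convex hull X" for z
  proof -
    define b where "b i = (SOME n. z $ i = \<alpha> ^ n)" for i
    have "z $ i = \<alpha> ^ b i" for i
      using z(1) unfolding lattice_L_def b_def by (auto intro: someI_ex)
    then have zb: "z = pt \<alpha> b" by (simp add: pt_def vec_eq_iff)
    consider "sum b UNIV = k" | "sum b UNIV < k" | "sum b UNIV \<ge> k + 1" by linarith
    then show ?thesis
    proof cases
      case 1 then show ?thesis unfolding zb X_def A_def by auto
    next
      case 2
      define w :: "real ^ 'n" where "w = (\<chi> i. 1 / \<alpha> ^ b i)"
      have "X \<subseteq> {y. w \<bullet> y > real CARD('n)}"
      proof
        fix y assume "y \<in> X"
        then obtain a where a: "a \<in> A" "y = pt \<alpha> a" unfolding X_def by blast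
        have "(\<Sum>i\<in>UNIV. \<alpha> ^ a i / \<alpha> ^ b i) \<ge> CARD('n) + ln \<alpha> * (real (sum a UNIV) - real (sum b UNIV))"
          by (intro L1(1) al)
        moreover have "ln \<alpha> * (real (sum a UNIV) - real (sum b UNIV)) > 0"
        proof -
          have "real (sum a UNIV) - real (sum b UNIV) > 0" using 2 a(1) unfolding A_def by (simp del: of_nat_sum)
          moreover have "ln \<alpha> > 0" using al by simp
          ultimately show ?thesis by (rule mult_pos_pos[rotated])
        qed
        ultimately show "y \<in> {y. w \<bullet> y > real CARD('n)}"
          using a by (simp add: w_def inner_div)
      qed
      then have "convex hull X \<subseteq> {y. w \<bullet> y > real CARD('n)}"
        by (intro hull_minimal convex_halfspace_gt)
      moreover have "w \<bullet> z = real CARD('n)" using al by (simp add: zb w_def inner_div)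
      ultimately show ?thesis using z(2) by auto
    next
      case 3
      define w :: "real ^ 'n" where "w = (\<chi> i. if 1 \<le> b i then 1 / \<alpha> ^ b i else 0)"
      have "X \<subseteq> {y. w \<bullet> y < real (card {i. 1 \<le> b i})}"
      proof
        fix y assume "y \<in> X"
        then obtain a where a: "a \<in> A" "y = pt \<alpha> a" unfolding X_def by blast
        have "(\<Sum>i\<in>{i. 1 \<le> b i}. \<alpha> ^ a i / \<alpha> ^ b i) < card {i. 1 \<le> b i}"
          by (rule L3[OF al kk _ 3]) (use a in \<open>simp add: A_def\<close>)
        then show "y \<in> {y. w \<bullet> y < real (card {i. 1 \<le> b i})}"
          unfolding a(2) using inner_if[of b \<alpha> a] unfolding w_def by simp
      qed
      then have "convex hull X \<subseteq> {y. w \<bullet> y < real (card {i. 1 \<le> b i})}"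
        by (intro hull_minimal convex_halfspace_lt)
      moreover have "w \<bullet> z = real (card {i. 1 \<le> b i})" using al inner_if[of b \<alpha> b] unfolding zb w_def by simp
      ultimately show ?thesis using z(2) by auto
    qed
  qed
  have neX: "X \<noteq> {}" using neA unfolding X_def by simp
  have fX: "finite X" using fA unfolding X_def by simp
  have "helly_number (lattice_L \<alpha> :: (real ^ 'n) set) \<ge> enat (card X)"
    by (rule helly_lower[OF fX XS neX cp em])
  moreover have "card X = (k + CARD('n) - 1) choose (CARD('n) - 1)"
  proof -
    have "(CARD('n) + k - 1) choose k = (k + CARD('n) - 1) choose ((k + CARD('n) - 1) - k)"
      using assms(2) by (subst binomial_symmetric) (auto simp: add.commute)
    also have "(k + CARD('n) - 1) - k = CARD('n) - 1" by simp
    finally show ?thesis using cX cA by simp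
  qed
  ultimately show ?thesis by simp
qed

end
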